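(* Let $I_1,I_3>0$ and $\gamma,\delta\in\mathbb{R}$. Consider the time-dependent Hamiltonian (harmonic Lagrange top with time-dependent potential) on the phase space with coordinates Euler angles $(\phi,\theta,\psi)$, $\theta\in(0,\pi)$, and conjugate momenta $(p_\phi,p_\theta,p_\psi)$: \[ H=\frac{1}{2I_1}\Big(p_\theta^2+\frac{p_\phi^2+p_\psi^2-2p_\phi p_\psi\cos\theta}{\sin^2\theta}\Big)+\frac12\Big(\frac1{I_3}-\frac1{I_1}\Big)p_\psi^2+U(\cos\theta,t), \] \[ U(z,t)=-\frac{1}{I_1}\Big(\tfrac12\gamma e^{t/I_1}z+\tfrac14\delta e^{2t/I_1}z^2\Big). \] Along any solution of Hamilton's equations, $p_\phi$ and $p_\psi$ are constant, and the function $y(\tau):=\theta(I_1\tau)$ (i.e.\ $\tau=t/I_1$) satisfies exactly the trigonometric form of $P_V$, \[ \frac{d^2y}{d\tau^2}=-\frac{\partial V}{\partial y},\qquad V(y,\tau)=-\frac{\kappa_\infty^2}{2\sin^2(y/2)}-\frac{\kappa_0^2}{2\cos^2(y/2)}-\frac{\gamma e^{\tau}}{2}\cos y-\frac{\delta e^{2\tau}}{4}\cos^2 y, \] with parameters $\kappa_0^2=-\tfrac14(p_\phi+p_\psi)^2$ and $\kappa_\infty^2=-\tfrac14(p_\phi-p_\psi)^2$. Conversely, the equation of motion of $\theta$ for this Hamiltonian (with fixed values of $p_\phi,p_\psi$) is equivalent to this trigonometric $P_V$ equation.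
   Context: Hamilton's equations are $\dot q=\partial H/\partial p$, $\dot p=-\partial H/\partial q$ for each conjugate pair $(q,p)\in\{(\phi,p_\phi),(\theta,p_\theta),(\psi,p_\psi)\}$, with $\dot{}=d/dt$. Through $w=-\cot^2(y/2)$, $\zeta=e^\tau$, the trigonometric form of $P_V$ is equivalent to the fifth Painlevé equation with $\alpha=\kappa_\infty^2/2$, $\beta=-\kappa_0^2/2$. *)

theory Defs
  imports "HOL-Analysis.Analysis"
begin

definition U_pot :: "real \<Rightarrow> real \<Rightarrow> real \<Rightarrow> real \<Rightarrow> real \<Rightarrow> real" where
  "U_pot I1 \<gamma> \<delta> z t =
     - (1 / I1) * ((1/2) * \<gamma> * exp (t / I1) * z + (1/4) * \<delta> * exp (2 * t / I1) * z\<^sup>2)"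

definition H_top :: "real \<Rightarrow> real \<Rightarrow> real \<Rightarrow> real \<Rightarrow> real \<Rightarrow> real \<Rightarrow> real \<Rightarrow> real \<Rightarrow> real \<Rightarrow> real \<Rightarrow> real \<Rightarrow> real" where
  "H_top I1 I3 \<gamma> \<delta> ph th ps pph pth pps t =
     (1 / (2 * I1)) * (pth\<^sup>2 + (pph\<^sup>2 + pps\<^sup>2 - 2 * pph * pps * cos th) / (sin th)\<^sup>2)
     + (1/2) * (1 / I3 - 1 / I1) * pps\<^sup>2 + U_pot I1 \<gamma> \<delta> (cos th) t"

definition hamilton_sol ::
  "real \<Rightarrow> real \<Rightarrow> real \<Rightarrow> real \<Rightarrow> real set \<Rightarrow> (real \<Rightarrow> real) \<Rightarrow> (real \<Rightarrow> real) \<Rightarrow> (real \<Rightarrow> real)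
    \<Rightarrow> (real \<Rightarrow> real) \<Rightarrow> (real \<Rightarrow> real) \<Rightarrow> (real \<Rightarrow> real) \<Rightarrow> bool" where
  "hamilton_sol I1 I3 \<gamma> \<delta> T ph th ps pph pth pps \<longleftrightarrow>
     (\<forall>t\<in>T.
       (ph has_real_derivative
          deriv (\<lambda>p. H_top I1 I3 \<gamma> \<delta> (ph t) (th t) (ps t) p (pth t) (pps t) t) (pph t)) (at t) \<and>
       (th has_real_derivative
          deriv (\<lambda>p. H_top I1 I3 \<gamma> \<delta> (ph t) (th t) (ps t) (pph t) p (pps t) t) (pth t)) (at t) \<and>
       (ps has_real_derivative
          deriv (\<lambda>p. H_top I1 I3 \<gamma> \<delta> (ph t) (th t) (ps t) (pph t) (pth t) p t) (pps t)) (at t) \<and>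
       (pph has_real_derivative
          - deriv (\<lambda>q. H_top I1 I3 \<gamma> \<delta> q (th t) (ps t) (pph t) (pth t) (pps t) t) (ph t)) (at t) \<and>
       (pth has_real_derivative
          - deriv (\<lambda>q. H_top I1 I3 \<gamma> \<delta> (ph t) q (ps t) (pph t) (pth t) (pps t) t) (th t)) (at t) \<and>
       (pps has_real_derivative
          - deriv (\<lambda>q. H_top I1 I3 \<gamma> \<delta> (ph t) (th t) q (pph t) (pth t) (pps t) t) (ps t)) (at t))"

definition V_PV :: "real \<Rightarrow> real \<Rightarrow> real \<Rightarrow> real \<Rightarrow> real \<Rightarrow> real \<Rightarrow> real" where
  "V_PV k0sq kinfsq \<gamma> \<delta> y \<tau> =
     - kinfsq / (2 * (sin (y / 2))\<^sup>2) - k0sq / (2 * (cos (y / 2))\<^sup>2)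
     - \<gamma> * exp \<tau> / 2 * cos y - \<delta> * exp (2 * \<tau>) / 4 * (cos y)\<^sup>2"

definition trig_PV :: "real \<Rightarrow> real \<Rightarrow> real \<Rightarrow> real \<Rightarrow> real set \<Rightarrow> (real \<Rightarrow> real) \<Rightarrow> bool" where
  "trig_PV k0sq kinfsq \<gamma> \<delta> S y \<longleftrightarrow>
     (\<exists>y'. \<forall>\<tau>\<in>S. (y has_real_derivative y' \<tau>) (at \<tau>) \<and>
        (y' has_real_derivative - deriv (\<lambda>u. V_PV k0sq kinfsq \<gamma> \<delta> u \<tau>) (y \<tau>)) (at \<tau>))"

end

theory Submission
  imports Defs
begin

lemma dH_q:
  assumes "sin th \<noteq> 0" "I1 > 0"
  shows "((\<lambda>q. H_top I1 I3 \<gamma> \<delta> x q z a p b t) has_real_derivative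
     (1/(2*I1)) * ((2*a*b* sin th * (sin th)\<^sup>2 - (a\<^sup>2+b\<^sup>2-2*a*b* cos th)*(2* sin th* cos th))/((sin th)\<^sup>2)\<^sup>2)
     + (1/I1)*((1/2)*\<gamma>* exp(t/I1) + (1/2)*\<delta>* exp(2*t/I1)* cos th)* sin th) (at th)"
  unfolding H_top_def U_pot_def
  using assms
  apply (auto intro!: derivative_eq_intros)
  apply (simp add: field_simps power2_eq_square)
  done

lemma dV:
  assumes "sin (y/2) \<noteq> 0" "cos (y/2) \<noteq> 0"
  shows "((\<lambda>u. V_PV k0 ki \<gamma> \<delta> u \<tau>) has_real_derivative
     ki * cos (y/2) / (2 * (sin (y/2))^3) - k0 * sin (y/2) / (2 * (cos (y/2))^3)
     + \<gamma> * exp \<tau> / 2 * sin y + \<delta> * exp (2*\<tau>) / 2 * cos y * sin y) (at y)"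
  unfolding V_PV_def
  using assms
  apply (auto intro!: derivative_eq_intros)
  apply (simp add: field_simps power2_eq_square power3_eq_cube)
  apply algebra
  done

lemma kin:
  fixes u v a b :: real
  assumes "u \<noteq> 0" "v \<noteq> 0" "u^2 + v^2 = 1"
  shows "(1/2) * ((2* a* b* (2* u* v) * (2* u* v)\<^sup>2 - (a\<^sup>2+b\<^sup>2-2* a* b* (v^2-u^2))* (2* (2* u* v)* (v^2-u^2)))/(((2* u* v))\<^sup>2)\<^sup>2)
    = (- (a - b)\<^sup>2 / 4) * v / (2 * u ^ 3) - (- (a + b)\<^sup>2 / 4) * u / (2 * v ^ 3)"
  using assms
  apply (simp add: field_simps)
  apply algebra
  done

lemma key:
  assumes th: "th \<in> {0<..<pi}" and I: "I1 > 0"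
  shows "I1 * deriv (\<lambda>q. H_top I1 I3 \<gamma> \<delta> x q z a p b t) th
       = deriv (\<lambda>u. V_PV (- (a + b)\<^sup>2 / 4) (- (a - b)\<^sup>2 / 4) \<gamma> \<delta> u (t/I1)) th"
proof -
  define u where "u = sin (th/2)"
  define v where "v = cos (th/2)"
  have sp: "sin th > 0" using th by (auto intro: sin_gt_zero)
  have up: "u > 0" unfolding u_def using th by (auto intro: sin_gt_zero)
  have vp: "v > 0" unfolding v_def using th by (auto intro!: cos_gt_zero_pi)
  have uv: "u^2 + v^2 = 1" unfolding u_def v_def by simp
  have s2: "sin th = 2 * u * v" unfolding u_def v_def
    using sin_double[of "th/2"] by simp
  have c2: "cos th = v^2 - u^2" unfolding u_def v_def
    using cos_double[of "th/2"] by simp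
  have sn: "sin th \<noteq> 0" using sp by simp
  have e: "exp (2 * t / I1) = exp (2 * (t / I1))" by simp
  have "I1 * deriv (\<lambda>q. H_top I1 I3 \<gamma> \<delta> x q z a p b t) th =
     (1/2) * ((2*a*b* sin th * (sin th)\<^sup>2 - (a\<^sup>2+b\<^sup>2-2*a*b* cos th)*(2* sin th* cos th))/((sin th)\<^sup>2)\<^sup>2)
     + ((1/2)*\<gamma>* exp(t/I1) + (1/2)*\<delta>* exp(2*(t/I1))* cos th)* sin th"
    unfolding DERIV_imp_deriv[OF dH_q[of th I1 I3 \<gamma> \<delta> x z a p b t, OF sn I]] e[symmetric]
    using sp I by (simp add: distrib_left)
  also have "\<dots> = (- (a - b)\<^sup>2 / 4) * v / (2 * u ^ 3) - (- (a + b)\<^sup>2 / 4) * u / (2 * v ^ 3)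
      + ((1/2)*\<gamma>* exp(t/I1) + (1/2)*\<delta>* exp(2*(t/I1))* cos th)* sin th"
    unfolding s2 c2 using kin[of u v a b] up vp uv by simp
  also have "\<dots> = deriv (\<lambda>u. V_PV (- (a + b)\<^sup>2 / 4) (- (a - b)\<^sup>2 / 4) \<gamma> \<delta> u (t/I1)) th"
    using DERIV_imp_deriv[OF dV[of th "- (a + b)\<^sup>2 / 4" "- (a - b)\<^sup>2 / 4" \<gamma> \<delta> "t/I1"]] up vp
    unfolding u_def v_def by (simp add: field_simps)
  finally show ?thesis .
qed

lemma dp:
  assumes "I1 > 0"
  shows "deriv (\<lambda>p. H_top I1 I3 \<gamma> \<delta> x q z a p b t) p0 = p0 / I1"
proof -
  have "((\<lambda>p. H_top I1 I3 \<gamma> \<delta> x q z a p b t) has_real_derivative p0 / I1) (at p0)"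
    unfolding H_top_def using assms
    by (auto intro!: derivative_eq_intros simp: field_simps)
  thus ?thesis by (rule DERIV_imp_deriv)
qed

lemma dph: "deriv (\<lambda>q. H_top I1 I3 \<gamma> \<delta> q th z a p b t) x = 0"
  by (simp add: H_top_def)

lemma dps: "deriv (\<lambda>q. H_top I1 I3 \<gamma> \<delta> x th q a p b t) z = 0"
  by (simp add: H_top_def)


lemma chainI:
  assumes "(f has_real_derivative D) (at (c * x))"
  shows "((\<lambda>x. f (c * x)) has_real_derivative D * c) (at x)"
proof -
  have "((\<lambda>x. c * x) has_real_derivative c) (at x)"
    by (auto intro!: derivative_eq_intros)
  from DERIV_chain2[OF assms this] show ?thesis .
qed

lemma fwd:
  assumes I: "I1 > 0" and thr: "\<forall>t\<in>T. th t \<in> {0<..<pi}"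
    and d1: "\<And>t. t \<in> T \<Longrightarrow> (th has_real_derivative
              deriv (\<lambda>p. H_top I1 I3 \<gamma> \<delta> (x t) (th t) (z t) a p b t) (pth t)) (at t)"
    and d2: "\<And>t. t \<in> T \<Longrightarrow> (pth has_real_derivative
              - deriv (\<lambda>q. H_top I1 I3 \<gamma> \<delta> (x t) q (z t) a (pth t) b t) (th t)) (at t)"
  shows "trig_PV (- (a + b)\<^sup>2 / 4) (- (a - b)\<^sup>2 / 4) \<gamma> \<delta> {\<tau>. I1 * \<tau> \<in> T} (\<lambda>\<tau>. th (I1 * \<tau>))"
  unfolding trig_PV_def
proof (intro exI[of _ "\<lambda>\<tau>. pth (I1 * \<tau>)"] ballI conjI)
  fix \<tau> assume "\<tau> \<in> {\<tau>. I1 * \<tau> \<in> T}"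
  then have tT: "I1 * \<tau> \<in> T" by simp
  show "((\<lambda>\<tau>. th (I1 * \<tau>)) has_real_derivative pth (I1 * \<tau>)) (at \<tau>)"
    using chainI[OF d1[OF tT]] I unfolding dp[OF I] by simp
  have "I1 * deriv (\<lambda>q. H_top I1 I3 \<gamma> \<delta> (x (I1 * \<tau>)) q (z (I1 * \<tau>)) a (pth (I1 * \<tau>)) b (I1 * \<tau>)) (th (I1 * \<tau>))
     = deriv (\<lambda>u. V_PV (- (a + b)\<^sup>2 / 4) (- (a - b)\<^sup>2 / 4) \<gamma> \<delta> u (I1 * \<tau> / I1)) (th (I1 * \<tau>))"
    by (rule key) (use thr tT I in auto)
  then show "((\<lambda>\<tau>. pth (I1 * \<tau>)) has_real_derivative
      - deriv (\<lambda>u. V_PV (- (a + b)\<^sup>2 / 4) (- (a - b)\<^sup>2 / 4) \<gamma> \<delta> u \<tau>) (th (I1 * \<tau>))) (at \<tau>)"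
    using chainI[OF d2[OF tT]] I by (simp add: algebra_simps)
qed

theorem theorem1:
  fixes I1 I3 \<gamma> \<delta> :: real and T :: "real set"
  assumes "I1 > 0" and "I3 > 0" and "open T" and "is_interval T"
  shows
   "(\<forall>ph th ps pph pth pps.
       hamilton_sol I1 I3 \<gamma> \<delta> T ph th ps pph pth pps \<and> (\<forall>t\<in>T. th t \<in> {0<..<pi}) \<longrightarrow>
       (\<exists>a b. (\<forall>t\<in>T. pph t = a \<and> pps t = b) \<and>
          trig_PV (- (a + b)\<^sup>2 / 4) (- (a - b)\<^sup>2 / 4) \<gamma> \<delta> {\<tau>. I1 * \<tau> \<in> T} (\<lambda>\<tau>. th (I1 * \<tau>))))
    \<and>
    (\<forall>a b th. (\<forall>t\<in>T. th t \<in> {0<..<pi}) \<longrightarrow>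
       ((\<exists>pth. \<forall>t\<in>T.
           (th has_real_derivative
              deriv (\<lambda>p. H_top I1 I3 \<gamma> \<delta> 0 (th t) 0 a p b t) (pth t)) (at t) \<and>
           (pth has_real_derivative
              - deriv (\<lambda>q. H_top I1 I3 \<gamma> \<delta> 0 q 0 a (pth t) b t) (th t)) (at t))
        \<longleftrightarrow>
        trig_PV (- (a + b)\<^sup>2 / 4) (- (a - b)\<^sup>2 / 4) \<gamma> \<delta> {\<tau>. I1 * \<tau> \<in> T} (\<lambda>\<tau>. th (I1 * \<tau>))))"
proof (intro conjI allI impI)
  have I: "I1 > 0" by fact
  have cvx: "convex T" using assms(4) by (rule is_interval_convex)
  fix ph th ps pph pth pps
  assume h: "hamilton_sol I1 I3 \<gamma> \<delta> T ph th ps pph pth pps \<and> (\<forall>t\<in>T. th t \<in> {0<..<pi})"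
  then have hs: "hamilton_sol I1 I3 \<gamma> \<delta> T ph th ps pph pth pps" and thr: "\<forall>t\<in>T. th t \<in> {0<..<pi}"
    by auto
  have "\<exists>a. \<forall>t\<in>T. pph t = a"
  proof (rule has_field_derivative_zero_constant[OF cvx])
    fix t assume "t \<in> T"
    then have "(pph has_real_derivative
          - deriv (\<lambda>q. H_top I1 I3 \<gamma> \<delta> q (th t) (ps t) (pph t) (pth t) (pps t) t) (ph t)) (at t)"
      using hs unfolding hamilton_sol_def by blast
    then show "(pph has_real_derivative 0) (at t within T)"
      unfolding dph by (simp add: has_field_derivative_at_within)
  qed
  then obtain a where a: "\<forall>t\<in>T. pph t = a" by blast
  have "\<exists>b. \<forall>t\<in>T. pps t = b"
  proof (rule has_field_derivative_zero_constant[OF cvx])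
    fix t assume "t \<in> T"
    then have "(pps has_real_derivative
          - deriv (\<lambda>q. H_top I1 I3 \<gamma> \<delta> (ph t) (th t) q (pph t) (pth t) (pps t) t) (ps t)) (at t)"
      using hs unfolding hamilton_sol_def by blast
    then show "(pps has_real_derivative 0) (at t within T)"
      unfolding dps by (simp add: has_field_derivative_at_within)
  qed
  then obtain b where b: "\<forall>t\<in>T. pps t = b" by blast
  have "trig_PV (- (a + b)\<^sup>2 / 4) (- (a - b)\<^sup>2 / 4) \<gamma> \<delta> {\<tau>. I1 * \<tau> \<in> T} (\<lambda>\<tau>. th (I1 * \<tau>))"
  proof (rule fwd[OF I thr, where x=ph and z=ps and pth=pth])
    fix t assume tT: "t \<in> T"
    show "(th has_real_derivative
              deriv (\<lambda>p. H_top I1 I3 \<gamma> \<delta> (ph t) (th t) (ps t) a p b t) (pth t)) (at t)"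
      using hs tT a b unfolding hamilton_sol_def by metis
    show "(pth has_real_derivative
              - deriv (\<lambda>q. H_top I1 I3 \<gamma> \<delta> (ph t) q (ps t) a (pth t) b t) (th t)) (at t)"
      using hs tT a b unfolding hamilton_sol_def by metis
  qed
  then show "\<exists>a b. (\<forall>t\<in>T. pph t = a \<and> pps t = b) \<and>
          trig_PV (- (a + b)\<^sup>2 / 4) (- (a - b)\<^sup>2 / 4) \<gamma> \<delta> {\<tau>. I1 * \<tau> \<in> T} (\<lambda>\<tau>. th (I1 * \<tau>))"
    using a b by blast
next
  have I: "I1 > 0" by fact
  fix a b th
  assume thr: "\<forall>t\<in>T. th t \<in> {0<..<pi}"
  show "(\<exists>pth. \<forall>t\<in>T.
           (th has_real_derivative
              deriv (\<lambda>p. H_top I1 I3 \<gamma> \<delta> 0 (th t) 0 a p b t) (pth t)) (at t) \<and>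
           (pth has_real_derivative
              - deriv (\<lambda>q. H_top I1 I3 \<gamma> \<delta> 0 q 0 a (pth t) b t) (th t)) (at t))
        \<longleftrightarrow>
        trig_PV (- (a + b)\<^sup>2 / 4) (- (a - b)\<^sup>2 / 4) \<gamma> \<delta> {\<tau>. I1 * \<tau> \<in> T} (\<lambda>\<tau>. th (I1 * \<tau>))"
  proof
    assume "\<exists>pth. \<forall>t\<in>T.
           (th has_real_derivative
              deriv (\<lambda>p. H_top I1 I3 \<gamma> \<delta> 0 (th t) 0 a p b t) (pth t)) (at t) \<and>
           (pth has_real_derivative
              - deriv (\<lambda>q. H_top I1 I3 \<gamma> \<delta> 0 q 0 a (pth t) b t) (th t)) (at t)"
    then obtain pth where P: "\<forall>t\<in>T.
           (th has_real_derivative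
              deriv (\<lambda>p. H_top I1 I3 \<gamma> \<delta> 0 (th t) 0 a p b t) (pth t)) (at t) \<and>
           (pth has_real_derivative
              - deriv (\<lambda>q. H_top I1 I3 \<gamma> \<delta> 0 q 0 a (pth t) b t) (th t)) (at t)" by blast
    show "trig_PV (- (a + b)\<^sup>2 / 4) (- (a - b)\<^sup>2 / 4) \<gamma> \<delta> {\<tau>. I1 * \<tau> \<in> T} (\<lambda>\<tau>. th (I1 * \<tau>))"
      by (rule fwd[OF I thr, where x="\<lambda>_. 0" and z="\<lambda>_. 0" and pth=pth]) (use P in auto)
  next
    assume "trig_PV (- (a + b)\<^sup>2 / 4) (- (a - b)\<^sup>2 / 4) \<gamma> \<delta> {\<tau>. I1 * \<tau> \<in> T} (\<lambda>\<tau>. th (I1 * \<tau>))"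
    then obtain y' where Y: "\<forall>\<tau>\<in>{\<tau>. I1 * \<tau> \<in> T}.
        ((\<lambda>\<tau>. th (I1 * \<tau>)) has_real_derivative y' \<tau>) (at \<tau>) \<and>
        (y' has_real_derivative - deriv (\<lambda>u. V_PV (- (a + b)\<^sup>2 / 4) (- (a - b)\<^sup>2 / 4) \<gamma> \<delta> u \<tau>) (th (I1 * \<tau>))) (at \<tau>)"
      unfolding trig_PV_def by blast
    show "\<exists>pth. \<forall>t\<in>T.
           (th has_real_derivative
              deriv (\<lambda>p. H_top I1 I3 \<gamma> \<delta> 0 (th t) 0 a p b t) (pth t)) (at t) \<and>
           (pth has_real_derivative
              - deriv (\<lambda>q. H_top I1 I3 \<gamma> \<delta> 0 q 0 a (pth t) b t) (th t)) (at t)"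
    proof (intro exI[of _ "\<lambda>t. y' (t / I1)"] ballI conjI)
      fix t assume tT: "t \<in> T"
      have cI: "I1 * (t / I1) = t" using I by simp
      have inS: "t / I1 \<in> {\<tau>. I1 * \<tau> \<in> T}" using tT cI by simp
      have ci: "(1 / I1) * x = x / I1" for x by simp
      have Y1: "((\<lambda>\<tau>. th (I1 * \<tau>)) has_real_derivative y' ((1/I1) * t)) (at ((1/I1) * t))"
        using Y inS by (simp add: ci)
      have fe: "(\<lambda>x. th (I1 * ((1/I1) * x))) = th" using I by auto
      show "(th has_real_derivative
              deriv (\<lambda>p. H_top I1 I3 \<gamma> \<delta> 0 (th t) 0 a p b t) (y' (t / I1))) (at t)"
        using chainI[OF Y1] unfolding fe dp[OF I] by (simp add: ci)
      have Y2: "(y' has_real_derivative - deriv (\<lambda>u. V_PV (- (a + b)\<^sup>2 / 4) (- (a - b)\<^sup>2 / 4) \<gamma> \<delta> u (t / I1)) (th t)) (at ((1/I1) * t))"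
      proof -
        have "(y' has_real_derivative - deriv (\<lambda>u. V_PV (- (a + b)\<^sup>2 / 4) (- (a - b)\<^sup>2 / 4) \<gamma> \<delta> u (t / I1)) (th (I1 * (t / I1)))) (at (t / I1))"
          using Y inS by blast
        then show ?thesis unfolding cI by (simp add: ci)
      qed
      have K: "I1 * deriv (\<lambda>q. H_top I1 I3 \<gamma> \<delta> 0 q 0 a (y' (t / I1)) b t) (th t)
         = deriv (\<lambda>u. V_PV (- (a + b)\<^sup>2 / 4) (- (a - b)\<^sup>2 / 4) \<gamma> \<delta> u (t / I1)) (th t)"
        by (rule key) (use thr tT I in auto)
      show "((\<lambda>t. y' (t / I1)) has_real_derivative
              - deriv (\<lambda>q. H_top I1 I3 \<gamma> \<delta> 0 q 0 a (y' (t / I1)) b t) (th t)) (at t)"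
        using chainI[OF Y2] I unfolding K[symmetric] by (simp add: ci)
    qed
  qed
qed

end
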